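(* Let $H_1,H_2\in\mathcal O$, let $\lambda_1,\dots,\lambda_N$ be the eigenvalues of $H_2$ with orthonormal eigenvectors $\psi_1,\dots,\psi_N$, and assume (i) $(H_1\psi_k,\psi_j)\ne0$ for all $k\ne j$ and (ii) $\lambda_k-\lambda_l\ne\lambda_{k'}-\lambda_{l'}$ for all ordered pairs $(k,l)\ne(k',l')$. Then $E_{k,j}\in\mathcal L(H_1,H_2)$ for all $k\neq j\in\{1,\dots,N\}$.
   Context: $\mathcal H=\mathbb C^N$, $N>1$; $\mathcal O$ is the real vector space of Hermitian operators with bracket $\{A,B\}=i(AB-BA)$; $\mathcal L(H_1,H_2)$ is the real linear span of $H_1,H_2$ and all iterated brackets of them. $E_{k,j}$ is the Hermitian operator with $(E_{k,j}\psi_{k'},\psi_{j'})=1$ if $k'=j'=k$, $=-1$ if $k'=j'=j$, and $=0$ otherwise (i.e. diagonal in the basis $\psi_1,\dots,\psi_N$ with entry $1$ at $k$, $-1$ at $j$). *)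

theory Defs
  imports "HOL-Analysis.Analysis"
begin

text \<open>Operators on C^N are complex N x N matrices, indexed by a finite type 'n with CARD('n) = N.\<close>

type_synonym 'n cmat = "complex ^ 'n ^ 'n"

definition hermitian :: "'n::finite cmat \<Rightarrow> bool" where
  "hermitian A \<longleftrightarrow> (\<forall>i j. A $ i $ j = cnj (A $ j $ i))"

definition cinner :: "complex ^ 'n::finite \<Rightarrow> complex ^ 'n \<Rightarrow> complex" where
  "cinner u v = (\<Sum>i\<in>UNIV. u $ i * cnj (v $ i))"

definition qbracket :: "'n::finite cmat \<Rightarrow> 'n cmat \<Rightarrow> 'n cmat" where
  "qbracket A B = (\<chi> a b. \<i> * ((A ** B - B ** A) $ a $ b))"

inductive_set iter_brackets :: "'n::finite cmat \<Rightarrow> 'n cmat \<Rightarrow> 'n cmat set"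
  for H1 H2 :: "'n cmat" where
  gen1: "H1 \<in> iter_brackets H1 H2"
| gen2: "H2 \<in> iter_brackets H1 H2"
| brk: "A \<in> iter_brackets H1 H2 \<Longrightarrow> B \<in> iter_brackets H1 H2 \<Longrightarrow> qbracket A B \<in> iter_brackets H1 H2"

text \<open>L(H1,H2): the real linear span (span over the reals, via scaleR).\<close>
definition lie_gen :: "'n::finite cmat \<Rightarrow> 'n cmat \<Rightarrow> 'n cmat set" where
  "lie_gen H1 H2 = span (iter_brackets H1 H2)"

text \<open>E_{k,j} w.r.t. the orthonormal basis psi: the operator
  |psi_k><psi_k| - |psi_j><psi_j|, i.e. diagonal in the basis psi with entry 1 at k, -1 at j.\<close>
definition Ekj :: "('n::finite \<Rightarrow> complex ^ 'n) \<Rightarrow> 'n \<Rightarrow> 'n \<Rightarrow> 'n cmat" where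
  "Ekj psi k j = (\<chi> a b. psi k $ a * cnj (psi k $ b) - psi j $ a * cnj (psi j $ b))"

end

theory Submission
  imports Defs
begin

lemma span_map:
  assumes "x \<in> span S" "f 0 = 0" "\<And>c a b. f (c *\<^sub>R a + b) = c *\<^sub>R f a + f b"
    "\<And>a. a \<in> S \<Longrightarrow> f a \<in> span T"
  shows "f x \<in> span T"
  using assms(1)
  by (induction rule: span_induct_alt) (auto simp: assms intro!: span_add span_mul span_zero)

lemma qbracket_lin1: "qbracket (c *\<^sub>R a + b) B = c *\<^sub>R qbracket a B + qbracket b B"
  apply (simp add: qbracket_def vec_eq_iff matrix_matrix_mult_def sum.distrib sum_distrib_left)
  by (simp add: scaleR_conv_of_real sum_distrib_left sum.distrib algebra_simps)

lemma qbracket_lin2: "qbracket B (c *\<^sub>R a + b) = c *\<^sub>R qbracket B a + qbracket B b"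
  apply (simp add: qbracket_def vec_eq_iff matrix_matrix_mult_def sum.distrib sum_distrib_left)
  by (simp add: scaleR_conv_of_real sum_distrib_left sum.distrib algebra_simps)

lemma qbracket_zero1: "qbracket 0 B = 0"
  by (simp add: qbracket_def vec_eq_iff matrix_matrix_mult_def)
lemma qbracket_zero2: "qbracket B 0 = 0"
  by (simp add: qbracket_def vec_eq_iff matrix_matrix_mult_def)

lemma lie_closed:
  assumes "A \<in> lie_gen H1 H2" "B \<in> lie_gen H1 H2"
  shows "qbracket A B \<in> lie_gen H1 H2"
proof -
  have 1: "qbracket a B \<in> lie_gen H1 H2" if a: "a \<in> iter_brackets H1 H2" for a
    using assms(2) unfolding lie_gen_def
    by (rule span_map[where f="qbracket a"])
       (auto simp: qbracket_zero2 qbracket_lin2 a iter_brackets.brk span_base)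
  show ?thesis
    using assms(1) unfolding lie_gen_def
    by (rule span_map[where f="\<lambda>x. qbracket x B"])
       (auto simp: qbracket_zero1 qbracket_lin1 1[unfolded lie_gen_def])
qed

lemma ad_diag:
  assumes "D = (\<chi> a b. if a = b then complex_of_real (lam a) else 0)"
  shows "qbracket X D = (\<chi> a b. \<i> * complex_of_real (lam b - lam a) * X $ a $ b)"
  by (simp add: assms qbracket_def vec_eq_iff matrix_matrix_mult_def
      if_distrib[of "\<lambda>x. x * _"] if_distrib[of "\<lambda>x. _ * x"] algebra_simps cong: if_cong)

lemma kk0: "k * cnj k = complex_of_real ((cmod k)^2)"
  by (simp only: of_real_power complex_norm_square[symmetric])
lemma kk1: "- (\<i> * (2 * (\<i> * (k * cnj k)))) = (2 * (cmod k)\<^sup>2) *\<^sub>R (1::complex)"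
  unfolding kk0 by (simp add: scaleR_conv_of_real algebra_simps del: of_real_power)
lemma kk2: "\<i> * (2 * (\<i> * (k * cnj k))) = - ((2 * (cmod k)\<^sup>2) *\<^sub>R (1::complex))"
  unfolding kk0 by (simp add: scaleR_conv_of_real algebra_simps del: of_real_power)

lemma sum_two:
  fixes f :: "'n::finite \<Rightarrow> complex"
  assumes "a \<noteq> b" "\<And>z. z \<noteq> a \<Longrightarrow> z \<noteq> b \<Longrightarrow> f z = 0"
  shows "sum f UNIV = f a + f b"
proof -
  have "sum f UNIV = sum f {a,b}"
    by (rule sum.mono_neutral_right) (use assms in auto)
  then show ?thesis using assms by simp
qed

lemma mult_two:
  fixes A B :: "'n::finite cmat"
  assumes "a \<noteq> b" "\<And>x z. z \<noteq> a \<Longrightarrow> z \<noteq> b \<Longrightarrow> A $ x $ z = 0"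
  shows "(A ** B) $ x $ y = A$x$a * B$a$y + A$x$b * B$b$y"
  unfolding matrix_matrix_mult_def using assms by (simp add: sum_two)

lemma bracket_calc:
  fixes k :: complex and a b :: "'n::finite"
  assumes ab: "a \<noteq> b"
  shows "qbracket (\<chi> x y. if x = a \<and> y = b then k else if x = b \<and> y = a then cnj k else 0)
                  (\<chi> x y. if x = a \<and> y = b then \<i> * k else if x = b \<and> y = a then - \<i> * cnj k else 0)
       = (2 * (cmod k)^2) *\<^sub>R (\<chi> x y. if x = y \<and> x = a then 1 else if x = y \<and> x = b then -1 else (0::complex))"
    (is "qbracket ?A ?B = _")
proof -
  have A0: "z \<noteq> a \<Longrightarrow> z \<noteq> b \<Longrightarrow> ?A $ x $ z = 0" for x z by simp
  have B0: "z \<noteq> a \<Longrightarrow> z \<noteq> b \<Longrightarrow> ?B $ x $ z = 0" for x z by simp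
  have *: "qbracket ?A ?B $ x $ y
       = (2 * (cmod k)^2) *\<^sub>R (if x = y \<and> x = a then 1 else if x = y \<and> x = b then -1 else (0::complex))" for x y
  proof -
    have "qbracket ?A ?B $ x $ y = \<i> * ((?A ** ?B) $ x $ y - (?B ** ?A) $ x $ y)"
      by (simp add: qbracket_def)
    also have "\<dots> = \<i> * ((?A$x$a * ?B$a$y + ?A$x$b * ?B$b$y) - (?B$x$a * ?A$a$y + ?B$x$b * ?A$b$y))"
    proof -
      have m1: "(?A ** ?B) $ x $ y = ?A$x$a * ?B$a$y + ?A$x$b * ?B$b$y"
        by (rule mult_two[OF ab]) simp
      have m2: "(?B ** ?A) $ x $ y = ?B$x$a * ?A$a$y + ?B$x$b * ?A$b$y"
        by (rule mult_two[OF ab]) simp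
      show ?thesis unfolding m1 m2 ..
    qed
    finally show ?thesis using ab
      apply (cases "x = a"; cases "y = a"; cases "x = b"; cases "y = b")
      by (simp_all add: kk1 kk2)
  qed
  show ?thesis by (simp add: vec_eq_iff *)
qed

lemma scaleR_entry: "((c::real) *\<^sub>R (M::'n::finite cmat)) $ x $ y = complex_of_real c * M $ x $ y"
  by (simp add: scaleR_conv_of_real[where 'a=complex])

lemma diag_case:
  fixes K D :: "'n::finite cmat" and lam :: "'n \<Rightarrow> real" and a b :: 'n
  assumes Dd: "D = (\<chi> a b. if a = b then complex_of_real (lam a) else 0)"
  and hK: "\<And>a b. K$b$a = cnj (K$a$b)"
  and cK: "\<And>a b. a \<noteq> b \<Longrightarrow> K$a$b \<noteq> 0"
  and gaps: "\<And>k l k' l'. k \<noteq> l \<Longrightarrow> k' \<noteq> l' \<Longrightarrow> (k, l) \<noteq> (k', l') \<Longrightarrow>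
                 lam k - lam l \<noteq> lam k' - lam l'"
  and ab: "a \<noteq> b"
  shows "(\<chi> x y. if x = y \<and> x = a then 1 else if x = y \<and> x = b then -1 else (0::complex)) \<in> lie_gen K D"
proof -
  define W where "W = lie_gen K D"
  have KW: "K \<in> W" unfolding W_def lie_gen_def by (rule span_base, rule iter_brackets.gen1)
  have DW: "D \<in> W" unfolding W_def lie_gen_def by (rule span_base, rule iter_brackets.gen2)
  define w where "w x y = lam y - lam x" for x y
  have ad: "qbracket X D = (\<chi> x y. \<i> * complex_of_real (w x y) * X $ x $ y)" for X
    unfolding w_def by (rule ad_diag[OF Dd])
  have adW: "X \<in> W \<Longrightarrow> (\<chi> x y. \<i> * complex_of_real (w x y) * X $ x $ y) \<in> W" for X
    using lie_closed[of X K D D] DW unfolding W_def ad by auto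
  define Pi where "Pi F x y = (\<Prod>p\<in>F. (w (fst p) (snd p))^2 - (w x y)^2)" for F x y
  have prodW: "(\<chi> x y. complex_of_real (Pi F x y) * Y $ x $ y) \<in> W" if "finite F" "Y \<in> W" for F Y
    using that(1)
  proof (induction F rule: finite_induct)
    case empty
    then show ?case using that(2) by (simp add: Pi_def)
  next
    case (insert p F)
    define Y' where "Y' = (\<chi> x y. complex_of_real (Pi F x y) * Y $ x $ y)"
    have "(\<chi> x y. \<i> * complex_of_real (w x y) * (\<chi> x y. \<i> * complex_of_real (w x y) * Y' $ x $ y) $ x $ y)
          + (w (fst p) (snd p))^2 *\<^sub>R Y' \<in> W"
    proof -
      have Y'W: "Y' \<in> W" using insert Y'_def by simp
      have 1: "(\<chi> x y. \<i> * complex_of_real (w x y) * (\<chi> x y. \<i> * complex_of_real (w x y) * Y' $ x $ y) $ x $ y) \<in> W"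
        by (rule adW, rule adW, rule Y'W)
      have 2: "(w (fst p) (snd p))^2 *\<^sub>R Y' \<in> W"
        using Y'W unfolding W_def lie_gen_def by (rule span_mul)
      show ?thesis using 1 2 unfolding W_def lie_gen_def by (rule span_add)
    qed
    also have "(\<chi> x y. \<i> * complex_of_real (w x y) * (\<chi> x y. \<i> * complex_of_real (w x y) * Y' $ x $ y) $ x $ y)
          + (w (fst p) (snd p))^2 *\<^sub>R Y' = (\<chi> x y. complex_of_real (Pi (insert p F) x y) * Y $ x $ y)"
      using insert by (simp add: vec_eq_iff Y'_def Pi_def scaleR_conv_of_real[where 'a=complex] algebra_simps power2_eq_square)
    finally show ?case .
  qed
  define F0 where "F0 = {p::'n\<times>'n. fst p \<noteq> snd p \<and> p \<noteq> (a,b) \<and> p \<noteq> (b,a)}"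
  have fF0: "finite F0" by simp
  have w0: "w a b \<noteq> 0" using gaps[of b a a b] ab unfolding w_def by auto
  have wsym: "w b a = - w a b" unfolding w_def by simp
  define C where "C = Pi F0 a b"
  have neq: "(w (fst p) (snd p))^2 - (w a b)^2 \<noteq> 0" if "p \<in> F0" for p
  proof
    obtain c d where p: "p = (c,d)" by (cases p)
    assume "(w (fst p) (snd p))^2 - (w a b)^2 = 0"
    then have "w c d = w a b \<or> w c d = - w a b" using p by (simp add: power2_eq_iff)
    then show False
    proof
      assume "w c d = w a b"
      then show False using gaps[of d c b a] that ab unfolding F0_def p w_def by auto
    next
      assume "w c d = - w a b"
      then show False using gaps[of d c a b] that ab unfolding F0_def p w_def by auto
    qed
  qed
  have C0: "C \<noteq> 0" unfolding C_def Pi_def using neq by simp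
  have Cba: "Pi F0 b a = C" unfolding C_def Pi_def wsym by simp
  have Pi0: "Pi F0 x y * w x y = 0" if "(x,y) \<noteq> (a,b)" "(x,y) \<noteq> (b,a)" for x y
  proof (cases "x = y")
    case True then show ?thesis unfolding w_def by simp
  next
    case False
    then have "(x,y) \<in> F0" using that unfolding F0_def by auto
    then show ?thesis unfolding Pi_def by (auto intro!: bexI[of _ "(x,y)"])
  qed
  define k where "k = K$a$b"
  have kba: "K$b$a = cnj k" unfolding k_def by (rule hK)
  define Z where "Z = (\<chi> x y. complex_of_real (Pi F0 x y) * (\<i> * complex_of_real (w x y) * K $ x $ y))"
  have ZW: "Z \<in> W" unfolding Z_def
    using prodW[OF fF0 adW[OF KW]] by (simp only: vec_lambda_beta)
  have Zeq: "Z = (\<chi> x y. if x = a \<and> y = b then complex_of_real C * \<i> * complex_of_real (w a b) * k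
      else if x = b \<and> y = a then - complex_of_real C * \<i> * complex_of_real (w a b) * cnj k else 0)"
  proof -
    have "Z $ x $ y = (if x = a \<and> y = b then complex_of_real C * \<i> * complex_of_real (w a b) * k
      else if x = b \<and> y = a then - complex_of_real C * \<i> * complex_of_real (w a b) * cnj k else 0)" for x y
    proof (cases "(x,y) = (a,b) \<or> (x,y) = (b,a)")
      case True
      then show ?thesis
      proof
        assume "(x,y) = (a,b)" then show ?thesis by (simp add: Z_def C_def k_def)
      next
        assume "(x,y) = (b,a)" then show ?thesis using ab by (simp add: Z_def Cba kba wsym)
      qed
    next
      case False
      from False have n1: "\<not> (x = a \<and> y = b)" and n2: "\<not> (x = b \<and> y = a)" by auto
      have "Z$x$y = complex_of_real (Pi F0 x y * w x y) * (\<i> * K$x$y)"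
        by (simp add: Z_def mult_ac)
      also have "\<dots> = 0" using Pi0 False by simp
      finally show ?thesis by (simp only: n1 n2 if_False)
    qed
    then show ?thesis by (simp add: vec_eq_iff)
  qed
  define A' where "A' = (\<chi> x y. if x = a \<and> y = b then k else if x = b \<and> y = a then cnj k else (0::complex))"
  define B' where "B' = (\<chi> x y. if x = a \<and> y = b then \<i> * k else if x = b \<and> y = a then - \<i> * cnj k else (0::complex))"
  have C0': "complex_of_real C \<noteq> 0" using C0 by simp
  have w0': "complex_of_real (w a b) \<noteq> 0" using w0 by simp
  have AW: "A' \<in> W"
  proof -
    have "(-1 / (C * (w a b)^2)) *\<^sub>R (\<chi> x y. \<i> * complex_of_real (w x y) * Z $ x $ y) \<in> W"
      using adW[OF ZW] unfolding W_def lie_gen_def by (rule span_mul)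
    also have "(-1 / (C * (w a b)^2)) *\<^sub>R (\<chi> x y. \<i> * complex_of_real (w x y) * Z $ x $ y) = A'"
    proof -
      have "complex_of_real (-1 / (C * (w a b)^2)) * (\<i> * complex_of_real (w x y) * Z $ x $ y) = A' $ x $ y" for x y
      proof -
        consider "x = a \<and> y = b" | "x = b \<and> y = a" | "\<not> (x = a \<and> y = b)" "\<not> (x = b \<and> y = a)" by blast
        then show ?thesis
        proof cases
          case 1 then show ?thesis using C0' w0' by (simp add: Zeq A'_def field_simps power2_eq_square)
        next
          case 2 then show ?thesis using C0' w0' ab by (simp add: Zeq A'_def wsym field_simps power2_eq_square)
        next
          case 3 then show ?thesis by (simp only: Zeq A'_def vec_lambda_beta if_False 3 mult_zero_right)
        qed
      qed
      then show ?thesis by (simp add: vec_eq_iff scaleR_conv_of_real[where 'a=complex])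
    qed
    finally show ?thesis .
  qed
  have BW: "B' \<in> W"
  proof -
    have "(1 / (C * w a b)) *\<^sub>R Z \<in> W"
      using ZW unfolding W_def lie_gen_def by (rule span_mul)
    also have "(1 / (C * w a b)) *\<^sub>R Z = B'"
    proof -
      have "complex_of_real (1 / (C * w a b)) * Z $ x $ y = B' $ x $ y" for x y
      proof -
        consider "x = a \<and> y = b" | "x = b \<and> y = a" | "\<not> (x = a \<and> y = b)" "\<not> (x = b \<and> y = a)" by blast
        then show ?thesis
        proof cases
          case 1 then show ?thesis using C0' w0' by (simp add: Zeq B'_def field_simps)
        next
          case 2 then show ?thesis using C0' w0' ab by (simp add: Zeq B'_def field_simps)
        next
          case 3 then show ?thesis by (simp only: Zeq B'_def vec_lambda_beta if_False 3 mult_zero_right)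
        qed
      qed
      then show ?thesis by (simp add: vec_eq_iff scaleR_conv_of_real[where 'a=complex])
    qed
    finally show ?thesis .
  qed
  have "qbracket A' B' \<in> W" using lie_closed[of A' K D B'] AW BW unfolding W_def by blast
  then have "(2 * (cmod k)^2) *\<^sub>R (\<chi> x y. if x = y \<and> x = a then 1 else if x = y \<and> x = b then -1 else (0::complex)) \<in> W"
    unfolding A'_def B'_def bracket_calc[OF ab] .
  then have "(1 / (2 * (cmod k)^2)) *\<^sub>R ((2 * (cmod k)^2) *\<^sub>R (\<chi> x y. if x = y \<and> x = a then 1 else if x = y \<and> x = b then -1 else (0::complex))) \<in> W"
    unfolding W_def lie_gen_def by (rule span_mul)
  moreover have "k \<noteq> 0" unfolding k_def using cK ab by blast
  ultimately show ?thesis unfolding W_def by simp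
qed

definition cs :: "complex \<Rightarrow> 'n::finite cmat \<Rightarrow> 'n cmat" where
  "cs c M = (\<chi> a b. c * M $ a $ b)"

lemma qbracket_cs: "qbracket A B = cs \<i> (A ** B - B ** A)"
  by (simp add: qbracket_def cs_def)

lemma cs_left: "(U::'n::finite cmat) ** cs c M = cs c (U ** M)"
  by (simp add: cs_def vec_eq_iff matrix_matrix_mult_def sum_distrib_left algebra_simps)

lemma cs_right: "cs c M ** (V::'n::finite cmat) = cs c (M ** V)"
  by (simp add: cs_def vec_eq_iff matrix_matrix_mult_def sum_distrib_left algebra_simps)

lemma diff_left: "(U::'n::finite cmat) ** (M - N) = U ** M - U ** N"
  by (simp add: vec_eq_iff matrix_matrix_mult_def sum_subtractf algebra_simps)

lemma diff_right: "(M - N) ** (V::'n::finite cmat) = M ** V - N ** V"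
  by (simp add: vec_eq_iff matrix_matrix_mult_def sum_subtractf algebra_simps)

lemma lin_left: "(U::'n::finite cmat) ** (c *\<^sub>R X + Y) = c *\<^sub>R (U ** X) + U ** Y"
  by (simp add: vec_eq_iff matrix_matrix_mult_def sum.distrib sum_distrib_left
      scaleR_conv_of_real[where 'a=complex] algebra_simps)

lemma lin_right: "(c *\<^sub>R X + Y) ** (V::'n::finite cmat) = c *\<^sub>R (X ** V) + Y ** V"
  by (simp add: vec_eq_iff matrix_matrix_mult_def sum.distrib sum_distrib_left
      scaleR_conv_of_real[where 'a=complex] algebra_simps)

lemma zero_left: "(U::'n::finite cmat) ** 0 = 0"
  by (simp add: vec_eq_iff matrix_matrix_mult_def)
lemma zero_right: "0 ** (U::'n::finite cmat) = 0"
  by (simp add: vec_eq_iff matrix_matrix_mult_def)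

lemma phi_br:
  fixes U Uh :: "'n::finite cmat"
  assumes inv: "Uh ** U = mat 1"
  shows "U ** qbracket X Y ** Uh = qbracket (U ** X ** Uh) (U ** Y ** Uh)"
proof -
  have m: "(U ** X ** Uh) ** (U ** Y ** Uh) = U ** (X ** Y) ** Uh" for X Y
  proof -
    have "(U ** X ** Uh) ** (U ** Y ** Uh) = U ** X ** (Uh ** U) ** Y ** Uh"
      by (simp add: matrix_mul_assoc)
    also have "\<dots> = U ** (X ** Y) ** Uh" by (simp add: inv matrix_mul_assoc)
    finally show ?thesis .
  qed
  show ?thesis
    unfolding qbracket_cs cs_left cs_right diff_left diff_right m ..
qed

lemma transfer_iter:
  fixes U Uh :: "'n::finite cmat"
  assumes inv: "Uh ** U = mat 1"
  shows "X \<in> iter_brackets K D \<Longrightarrow> U ** X ** Uh \<in> iter_brackets (U ** K ** Uh) (U ** D ** Uh)"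
proof (induction rule: iter_brackets.induct)
  case gen1 then show ?case by (rule iter_brackets.gen1)
next
  case gen2 then show ?case by (rule iter_brackets.gen2)
next
  case (brk A B) then show ?case unfolding phi_br[OF inv] by (blast intro: iter_brackets.brk)
qed

lemma transfer_lie:
  fixes U Uh :: "'n::finite cmat"
  assumes inv: "Uh ** U = mat 1" and X: "X \<in> lie_gen K D"
  shows "U ** X ** Uh \<in> lie_gen (U ** K ** Uh) (U ** D ** Uh)"
  using X unfolding lie_gen_def
  by (rule span_map[where f="\<lambda>X. U ** X ** Uh"])
     (auto simp: lin_left lin_right zero_left zero_right intro: span_base transfer_iter[OF inv])

theorem mainTheorem8:
  fixes H1 H2 :: "complex ^ 'n::finite ^ 'n"
    and psi :: "'n \<Rightarrow> complex ^ 'n"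
    and lam :: "'n \<Rightarrow> real"
  assumes N: "CARD('n) > 1"
    and herm1: "hermitian H1"
    and herm2: "hermitian H2"
    and orthonormal: "\<And>k j. cinner (psi k) (psi j) = (if k = j then 1 else 0)"
    and eigen: "\<And>k. H2 *v psi k = complex_of_real (lam k) *s psi k"
    and coupling: "\<And>k j. k \<noteq> j \<Longrightarrow> cinner (H1 *v psi k) (psi j) \<noteq> 0"
    and gaps: "\<And>k l k' l'. k \<noteq> l \<Longrightarrow> k' \<noteq> l' \<Longrightarrow> (k, l) \<noteq> (k', l') \<Longrightarrow>
                 lam k - lam l \<noteq> lam k' - lam l'"
  shows "\<forall>k j. k \<noteq> j \<longrightarrow> Ekj psi k j \<in> lie_gen H1 H2"
proof (intro allI impI)
  fix k j :: 'n assume kj: "k \<noteq> j"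
  define U :: "'n cmat" where "U = (\<chi> x a. psi a $ x)"
  define Uh :: "'n cmat" where "Uh = (\<chi> a x. cnj (psi a $ x))"
  have orth': "(\<Sum>x\<in>UNIV. cnj (psi a $ x) * psi b $ x) = (if a = b then 1 else 0)" for a b
    using orthonormal[of b a] by (auto simp: cinner_def mult.commute)
  have inv1: "Uh ** U = mat 1"
    by (simp add: vec_eq_iff matrix_matrix_mult_def U_def Uh_def orth' mat_def)
  have inv2: "U ** Uh = mat 1" using inv1 matrix_left_right_inverse by blast
  define K where "K = Uh ** (H1 ** U)"
  define D where "D = Uh ** (H2 ** U)"
  have backeq: "U ** (Uh ** (H ** U)) ** Uh = H" for H :: "'n cmat"
  proof -
    have "U ** (Uh ** (H ** U)) ** Uh = (U ** Uh) ** H ** (U ** Uh)"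
      by (simp add: matrix_mul_assoc)
    also have "\<dots> = H" by (simp add: inv2)
    finally show ?thesis .
  qed
  have HU: "(H ** U) $ z $ b = (H *v psi b) $ z" for H :: "'n cmat" and z b
    by (simp add: matrix_matrix_mult_def matrix_vector_mult_def U_def)
  have Kab: "K $ a $ b = cinner (H1 *v psi b) (psi a)" for a b
    unfolding K_def matrix_matrix_mult_def[of Uh] by (simp add: HU cinner_def Uh_def mult.commute)
  have Dd: "D = (\<chi> a b. if a = b then complex_of_real (lam a) else 0)"
  proof -
    have "D $ a $ b = (if a = b then complex_of_real (lam a) else 0)" for a b
    proof -
      have "D $ a $ b = (\<Sum>z\<in>UNIV. cnj (psi a $ z) * (complex_of_real (lam b) * psi b $ z))"
        unfolding D_def matrix_matrix_mult_def[of Uh] by (simp add: HU eigen Uh_def)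
      also have "\<dots> = complex_of_real (lam b) * (\<Sum>z\<in>UNIV. cnj (psi a $ z) * psi b $ z)"
        by (simp add: sum_distrib_left mult_ac)
      finally show ?thesis by (simp add: orth')
    qed
    then show ?thesis by (simp add: vec_eq_iff)
  qed
  have cK: "\<And>a b. a \<noteq> b \<Longrightarrow> K$a$b \<noteq> 0" unfolding Kab using coupling by auto
  have hh: "cnj (H1$i$i') = H1$i'$i" for i i'
    using herm1 unfolding hermitian_def by (metis complex_cnj_cnj)
  have hK: "K$b$a = cnj (K$a$b)" for a b
  proof -
    have "cnj (K$a$b) = (\<Sum>z\<in>UNIV. \<Sum>x\<in>UNIV. psi a $ z * H1$x$z * cnj (psi b $ x))"
      by (simp add: Kab cinner_def matrix_vector_mult_def sum_distrib_left sum_distrib_right hh mult_ac)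
    also have "\<dots> = (\<Sum>x\<in>UNIV. \<Sum>z\<in>UNIV. psi a $ z * H1$x$z * cnj (psi b $ x))"
      by (rule sum.swap)
    also have "\<dots> = K$b$a"
      by (simp add: Kab cinner_def matrix_vector_mult_def sum_distrib_left sum_distrib_right mult_ac)
    finally show ?thesis by simp
  qed
  define E :: "'n cmat" where "E = (\<chi> x y. if x = y \<and> x = k then 1 else if x = y \<and> x = j then -1 else (0::complex))"
  have EL: "E \<in> lie_gen K D"
    unfolding E_def by (rule diag_case[OF Dd hK cK gaps kj])
  have "U ** E ** Uh \<in> lie_gen (U ** K ** Uh) (U ** D ** Uh)"
    by (rule transfer_lie[OF inv1 EL])
  moreover have "U ** K ** Uh = H1" "U ** D ** Uh = H2" unfolding K_def D_def by (rule backeq)+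
  moreover have "U ** E ** Uh = Ekj psi k j"
  proof -
    have UE: "(U ** E) $ x $ w = psi k $ x * E $ k $ w + psi j $ x * E $ j $ w" for x w
      unfolding matrix_matrix_mult_def using kj
      by (subst sum_two[OF kj]) (auto simp: U_def E_def)
    have UE': "(U ** E) $ x $ w = (if w = k then psi k $ x else if w = j then - psi j $ x else 0)" for x w
      unfolding UE using kj by (auto simp: E_def)
    have "(U ** E ** Uh) $ x $ y = psi k $ x * cnj (psi k $ y) - psi j $ x * cnj (psi j $ y)" for x y
      unfolding matrix_matrix_mult_def[of "U ** E"] using kj
      by (subst sum_two[OF kj]) (auto simp: UE' Uh_def)
    then show ?thesis by (simp add: vec_eq_iff Ekj_def)
  qed
  ultimately show "Ekj psi k j \<in> lie_gen H1 H2" by simp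
qed

end
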